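(* Consider the auxiliary dynamics defined by the sets $\mathcal A^\alpha$, $\mathcal A^\alpha_i$ below, on the torus $\mathbb Z^d/L\mathbb Z^d$ for $L$ large. Then for every configuration $\eta$ and every $\alpha\in\{1,\dots,d\}$ the total current in direction $\alpha$ vanishes: $$\sum_{x}c^{\mathrm{aux}}_{x,x+e_\alpha}(\eta)\big(\eta(x)-\eta(x+e_\alpha)\big)=0.$$
   Context: For each $\alpha\in\{1,\dots,d\}$ let $\mathcal A^\alpha=\{x^\alpha_1,\dots,x^\alpha_{n_\alpha}\}\subset\mathbb Z^d$ be a finite set of distinct sites ordered so that $x^\alpha_i\cdot e_\alpha\ge x^\alpha_j\cdot e_\alpha$ whenever $i\le j$ ($e_1,\dots,e_d$ the standard basis), and set $\mathcal A^\alpha_i=\{x^\alpha_j+e_\alpha:1\le j\le i\}\cup\{x^\alpha_j:i+1\le j\le n_\alpha\}$, $0\le i\le n_\alpha$. Configurations are $\eta\in\{0,1\}^{\mathbb Z^d/L\mathbb Z^d}$ ($0$ = empty); sites are taken modulo $L$, with $L$ large enough that all the sets involved are embedded injectively. The auxiliary dynamics exchanges $x+x^\alpha_{i+1}$ and $x+x^\alpha_{i+1}+e_\alpha$ at rate $1$ whenever $x+\mathcal A^\alpha_i$ is empty ($0\le i<n_\alpha$, forward transitions), and exchanges $x+x^\alpha_i$ and $x+x^\alpha_i+e_\alpha$ at rate $1$ whenever $x+\mathcal A^\alpha_i$ is empty ($1\le i\le n_\alpha$, backward transitions). Equivalently, the rate of exchanging $x$ and $x+e_\alpha$ is $c^{\mathrm{aux}}_{x,x+e_\alpha}(\eta)=\#\{i\in\{0,\dots,n_\alpha-1\}:(x-x^\alpha_{i+1}+\mathcal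 A^\alpha_i)\setminus\{x\}\text{ is empty in }\eta\}$ whenever $\eta(x)\ne\eta(x+e_\alpha)$. *)

theory Defs
  imports "HOL-Analysis.Analysis"
begin

text \<open>Sites of Z^d are vectors int^'d (the finite type 'd indexes the d directions;
  e_alpha = axis alpha 1). A site is reduced to the torus Z^d/LZ^d by taking
  every coordinate mod L.\<close>

definition tor :: "int \<Rightarrow> int^'d \<Rightarrow> int^'d" where
  "tor L x = (\<chi> k. x $ k mod L)"

definition torus :: "int \<Rightarrow> (int^'d) set" where
  "torus L = {x. \<forall>k. 0 \<le> x $ k \<and> x $ k < L}"

text \<open>A^alpha is given by the list xs = [x_1,...,x_n] (0-indexed in Isabelle:
  x_{j+1} = xs!j). Aset xs alpha i is the set A^alpha_i, 0 <= i <= n.\<close>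
definition Aset :: "(int^'d) list \<Rightarrow> 'd \<Rightarrow> nat \<Rightarrow> (int^'d) set" where
  "Aset xs \<alpha> i = {xs ! j + axis \<alpha> 1 | j. j < i} \<union> {xs ! j | j. i \<le> j \<and> j < length xs}"

text \<open>A set of sites (of Z^d, read modulo L) is empty in the configuration eta
  (eta y = True means site y of the torus is occupied).\<close>
definition empty_in :: "int \<Rightarrow> (int^'d \<Rightarrow> bool) \<Rightarrow> (int^'d) set \<Rightarrow> bool" where
  "empty_in L \<eta> S = (\<forall>y\<in>S. \<not> \<eta> (tor L y))"

text \<open>c^aux_{x,x+e_alpha}(eta) = #{i in {0..n-1}: (x - x_{i+1} + A_i) minus {x} is empty},
  the removal of x being taken on the torus.\<close>
definition c_aux :: "int \<Rightarrow> (int^'d) list \<Rightarrow> 'd \<Rightarrow> (int^'d \<Rightarrow> bool) \<Rightarrow> int^'d \<Rightarrow> nat" where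
  "c_aux L xs \<alpha> \<eta> x = card {i. i < length xs \<and>
     empty_in L \<eta> ((\<lambda>y. x - xs ! i + y) ` Aset xs \<alpha> i - {y. tor L y = tor L x})}"

end

theory Submission
  imports Defs
begin

lemma tor_tor: "tor L (tor L a + b) = tor L (a + b)"
  unfolding tor_def vec_eq_iff by (simp add: mod_add_left_eq)

lemma tor_add_cancel: "tor L (z + a) = tor L (z + b) \<Longrightarrow> tor L a = tor L b"
proof -
  assume h: "tor L (z + a) = tor L (z + b)"
  have "a $ k mod L = b $ k mod L" for k
  proof -
    have e: "(z $ k + a $ k) mod L = (z $ k + b $ k) mod L"
      using h unfolding tor_def vec_eq_iff by simp
    have "a $ k mod L = ((z $ k + a $ k) - z $ k) mod L" by simp
    also have "\<dots> = ((z $ k + a $ k) mod L - z $ k) mod L" by (simp add: mod_diff_left_eq)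
    also have "\<dots> = ((z $ k + b $ k) mod L - z $ k) mod L" using e by simp
    also have "\<dots> = b $ k mod L" by (simp add: mod_diff_left_eq)
    finally show ?thesis .
  qed
  thus ?thesis unfolding tor_def vec_eq_iff by simp
qed

lemma tor_in_torus: "L > 0 \<Longrightarrow> tor L a \<in> torus L"
  unfolding tor_def torus_def by simp

lemma tor_id: "x \<in> torus L \<Longrightarrow> tor L x = x"
  unfolding tor_def torus_def vec_eq_iff by simp

lemma empty_shift:
  assumes "tor L u = tor L v"
  shows "empty_in L \<eta> ((\<lambda>y. u + y) ` S) = empty_in L \<eta> ((\<lambda>y. v + y) ` S)"
proof -
  have "tor L (u + y) = tor L (v + y)" for y
    by (metis assms tor_tor)
  thus ?thesis unfolding empty_in_def by auto
qed

lemma torus_shift: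
  fixes g :: "int^'d::finite \<Rightarrow> int"
  assumes L: "L > 0" and per: "\<And>y. g (tor L y) = g y"
  shows "(\<Sum>x\<in>torus L. g (x + v)) = (\<Sum>x\<in>torus L. g x)"
proof -
  have "(\<Sum>x\<in>torus L. g (x + v)) = (\<Sum>x\<in>torus L. g (tor L (x + v)))"
    by (simp add: per)
  also have "\<dots> = (\<Sum>x\<in>torus L. g x)"
  proof (rule sum.reindex_bij_witness[where i = "\<lambda>y. tor L (y - v)" and j = "\<lambda>x. tor L (x + v)"])
    fix a :: "int^'d" assume a: "a \<in> torus L"
    have "tor L (tor L (a + v) - v) = tor L (a + v - v)"
      using tor_tor[of L "a + v" "- v"] by simp
    thus "tor L (tor L (a + v) - v) = a" using a tor_id by simp
    show "tor L (a + v) \<in> torus L" using L tor_in_torus by blast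
  next
    fix b :: "int^'d" assume b: "b \<in> torus L"
    have "tor L (tor L (b - v) + v) = tor L (b - v + v)"
      using tor_tor by blast
    thus "tor L (tor L (b - v) + v) = b" using b tor_id by simp
    show "tor L (b - v) \<in> torus L" using L tor_in_torus by blast
  qed simp
  finally show ?thesis .
qed

definition FF :: "int \<Rightarrow> (int^'d \<Rightarrow> bool) \<Rightarrow> (int^'d) list \<Rightarrow> 'd \<Rightarrow> nat \<Rightarrow> int^'d \<Rightarrow> int" where
  "FF L \<eta> xs \<alpha> k z = of_bool (empty_in L \<eta> ((\<lambda>y. z + y) ` Aset xs \<alpha> k))"

lemma FF_per: "FF L \<eta> xs \<alpha> k (tor L z) = FF L \<eta> xs \<alpha> k z"
  unfolding FF_def using empty_shift[of L "tor L z" z] tor_tor[of L z 0] by simp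

lemma key:
  fixes xs :: "(int^'d::finite) list"
  assumes dist: "distinct xs"
    and sort: "sorted_wrt (\<lambda>a b. b $ \<alpha> \<le> a $ \<alpha>) xs"
    and inj: "inj_on (tor L) (set xs \<union> (\<lambda>y. y + axis \<alpha> 1) ` set xs)"
    and i: "i < length xs"
  shows "int (of_bool (empty_in L \<eta> ((\<lambda>y. x - xs ! i + y) ` Aset xs \<alpha> i - {y. tor L y = tor L x}))) *
     (of_bool (\<eta> (tor L x)) - of_bool (\<eta> (tor L (x + axis \<alpha> 1))))
   = FF L \<eta> xs \<alpha> (Suc i) (x - xs ! i) - FF L \<eta> xs \<alpha> i (x - xs ! i)"
proof -
  define e :: "int^'d" where "e = axis \<alpha> 1"
  define z where "z = x - xs ! i"
  define S where "S = (\<lambda>y. z + y) ` Aset xs \<alpha> i"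
  define B where "B = S - {y. tor L y = tor L x}"
  have ecomp: "(w + e) $ \<alpha> = w $ \<alpha> + 1" for w by (simp add: e_def)
  have xS: "x \<in> S" unfolding S_def Aset_def z_def using i by force
  have inj2: "a = b" if "a \<in> set xs \<union> (\<lambda>y. y + e) ` set xs" "b \<in> set xs \<union> (\<lambda>y. y + e) ` set xs"
     "tor L (z + a) = tor L (z + b)" for a b
    using inj that tor_add_cancel[OF that(3)] unfolding e_def inj_on_def by blast
  have h1: "(\<lambda>y. z + y) ` Aset xs \<alpha> (Suc i) = B \<union> {x + e}"
  proof (rule set_eqI, rule iffI)
    fix y assume "y \<in> (\<lambda>y. z + y) ` Aset xs \<alpha> (Suc i)"
    then obtain w where w: "w \<in> Aset xs \<alpha> (Suc i)" and y: "y = z + w" by blast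
    from w consider (a) j where "j < Suc i" "w = xs ! j + e" | (b) j where "Suc i \<le> j" "j < length xs" "w = xs ! j"
      unfolding Aset_def e_def by blast
    then show "y \<in> B \<union> {x + e}"
    proof cases
      case a
      show ?thesis
      proof (cases "j = i")
        case True thus ?thesis using a y z_def by simp
      next
        case False
        hence ji: "j < i" using a by simp
        have yS: "y \<in> S" unfolding S_def Aset_def using a ji y e_def by blast
        have "tor L y \<noteq> tor L x"
        proof
          assume t: "tor L y = tor L x"
          have "x = z + xs ! i" by (simp add: z_def)
          hence "xs ! j + e = xs ! i"
            using inj2[of "xs ! j + e" "xs ! i"] t y a ji i by simp
          moreover have "xs ! i $ \<alpha> \<le> xs ! j $ \<alpha>" using sorted_wrt_nth_less[OF sort ji i] by simp
          ultimately show False using ecomp[of "xs ! j"] by simp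
        qed
        thus ?thesis using yS B_def by simp
      qed
    next
      case b
      have yS: "y \<in> S" unfolding S_def Aset_def using b y by force
      have "tor L y \<noteq> tor L x"
      proof
        assume t: "tor L y = tor L x"
        have "x = z + xs ! i" by (simp add: z_def)
        hence "xs ! j = xs ! i"
          using inj2[of "xs ! j" "xs ! i"] t y b i by simp
        thus False using dist b i by (simp add: nth_eq_iff_index_eq)
      qed
      thus ?thesis using yS B_def by simp
    qed
  next
    fix y assume "y \<in> B \<union> {x + e}"
    then consider (x) "y = x + e" | (B) "y \<in> S" "tor L y \<noteq> tor L x" unfolding B_def by blast
    then show "y \<in> (\<lambda>y. z + y) ` Aset xs \<alpha> (Suc i)"
    proof cases
      case x
      have "xs ! i + e \<in> Aset xs \<alpha> (Suc i)" unfolding Aset_def e_def by blast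
      moreover have "y = z + (xs ! i + e)" using x z_def by (simp add: algebra_simps)
      ultimately show ?thesis by blast
    next
      case B
      then obtain w where w: "w \<in> Aset xs \<alpha> i" and y: "y = z + w" unfolding S_def by blast
      from w consider (a) j where "j < i" "w = xs ! j + e" | (b) j where "i \<le> j" "j < length xs" "w = xs ! j"
        unfolding Aset_def e_def by blast
      then show ?thesis
      proof cases
        case a thus ?thesis unfolding Aset_def e_def using y by force
      next
        case b
        have "j \<noteq> i" using B b y z_def by auto
        hence "Suc i \<le> j" using b by simp
        thus ?thesis unfolding Aset_def using b y by force
      qed
    qed
  qed
  have E1: "empty_in L \<eta> S = (empty_in L \<eta> B \<and> \<not> \<eta> (tor L x))"
    unfolding empty_in_def B_def using xS by auto
  have E2: "empty_in L \<eta> (B \<union> {x + e}) = (empty_in L \<eta> B \<and> \<not> \<eta> (tor L (x + e)))"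
    unfolding empty_in_def by auto
  show ?thesis
    unfolding FF_def using E1 E2 h1
    by (simp add: S_def B_def z_def e_def of_bool_def split: if_splits) 
qed

lemma card_sum: "int (card {i. i < (n::nat) \<and> P i}) = (\<Sum>i<n. int (of_bool (P i)))"
proof -
  have "int (card {i. i < n \<and> P i}) = (\<Sum>i\<in>{i \<in> {..<n}. P i}. 1)" by simp
  also have "\<dots> = (\<Sum>i<n. if P i then 1 else 0)" by (rule sum.inter_filter) (rule finite_lessThan)
  also have "\<dots> = (\<Sum>i<n. int (of_bool (P i)))" by (rule sum.cong) auto
  finally show ?thesis .
qed

theorem mainTheorem6:
  fixes A :: "'d::finite \<Rightarrow> (int^'d) list"
    and L :: int
    and \<eta> :: "int^'d \<Rightarrow> bool"
    and \<alpha> :: 'd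
  assumes "L > 0"
    and "\<forall>\<beta>. distinct (A \<beta>)"
    and "\<forall>\<beta>. sorted_wrt (\<lambda>a b. b $ \<beta> \<le> a $ \<beta>) (A \<beta>)"
    and "\<forall>\<beta>. inj_on (tor L) (set (A \<beta>) \<union> (\<lambda>y. y + axis \<beta> 1) ` set (A \<beta>))"
  shows "(\<Sum>x\<in>torus L. int (c_aux L (A \<alpha>) \<alpha> \<eta> x) *
            (of_bool (\<eta> (tor L x)) - of_bool (\<eta> (tor L (x + axis \<alpha> 1))))) = (0::int)"
proof -
  define xs where "xs = A \<alpha>"
  define n where "n = length xs"
  define F where "F = FF L \<eta> xs \<alpha>"
  define e :: "int^'d" where "e = axis \<alpha> 1"
  have dist: "distinct xs" and sort: "sorted_wrt (\<lambda>a b. b $ \<alpha> \<le> a $ \<alpha>) xs"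
    and inj: "inj_on (tor L) (set xs \<union> (\<lambda>y. y + axis \<alpha> 1) ` set xs)"
    using assms unfolding xs_def by auto
  have Fper: "F k (tor L y) = F k y" for k y unfolding F_def by (rule FF_per)
  have "(\<Sum>x\<in>torus L. int (c_aux L xs \<alpha> \<eta> x) *
            (of_bool (\<eta> (tor L x)) - of_bool (\<eta> (tor L (x + e)))))
      = (\<Sum>x\<in>torus L. \<Sum>i<n. F (Suc i) (x - xs ! i) - F i (x - xs ! i))"
  proof (rule sum.cong[OF refl])
    fix x
    show "int (c_aux L xs \<alpha> \<eta> x) * (of_bool (\<eta> (tor L x)) - of_bool (\<eta> (tor L (x + e))))
      = (\<Sum>i<n. F (Suc i) (x - xs ! i) - F i (x - xs ! i))"
      unfolding c_aux_def card_sum sum_distrib_right n_def F_def e_def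
      by (rule sum.cong[OF refl], rule key[OF dist sort inj]) simp
  qed
  also have "\<dots> = (\<Sum>i<n. \<Sum>x\<in>torus L. F (Suc i) (x - xs ! i) - F i (x - xs ! i))"
    by (rule sum.swap)
  also have "\<dots> = (\<Sum>i<n. (\<Sum>x\<in>torus L. F (Suc i) x) - (\<Sum>x\<in>torus L. F i x))"
  proof (rule sum.cong[OF refl])
    fix i
    have "(\<Sum>x\<in>torus L. F (Suc i) (x - xs ! i) - F i (x - xs ! i))
        = (\<Sum>x\<in>torus L. (\<lambda>y. F (Suc i) y - F i y) (x + (- (xs ! i))))" by simp
    also have "\<dots> = (\<Sum>x\<in>torus L. F (Suc i) x - F i x)"
      by (rule torus_shift[OF assms(1)]) (simp add: Fper)
    finally show "(\<Sum>x\<in>torus L. F (Suc i) (x - xs ! i) - F i (x - xs ! i))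
        = (\<Sum>x\<in>torus L. F (Suc i) x) - (\<Sum>x\<in>torus L. F i x)"
      by (simp add: sum_subtractf)
  qed
  also have "\<dots> = (\<Sum>x\<in>torus L. F n x) - (\<Sum>x\<in>torus L. F 0 x)"
    by (rule sum_lessThan_telescope)
  also have "(\<Sum>x\<in>torus L. F n x) = (\<Sum>x\<in>torus L. F 0 (x + e))"
  proof (rule sum.cong[OF refl])
    fix x
    have "(\<lambda>y. x + y) ` Aset xs \<alpha> n = (\<lambda>y. (x + e) + y) ` Aset xs \<alpha> 0"
    proof -
      have a: "Aset xs \<alpha> n = (\<lambda>y. y + e) ` set xs"
        unfolding Aset_def n_def e_def by (auto simp: in_set_conv_nth image_iff)
      have b: "Aset xs \<alpha> 0 = set xs"
        unfolding Aset_def by (auto simp: in_set_conv_nth)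
      show ?thesis unfolding a b image_image by (simp add: algebra_simps)
    qed
    thus "F n x = F 0 (x + e)" unfolding F_def FF_def by simp
  qed
  also have "\<dots> = (\<Sum>x\<in>torus L. F 0 x)"
    by (rule torus_shift[OF assms(1)]) (simp add: Fper)
  finally show ?thesis unfolding xs_def e_def by simp
qed

end
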